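(* Let $n\ge2$ and $N\ge1$, and let $R=\begin{pmatrix}M_0&0\\0&M_0\end{pmatrix}$, where $M_0$ is the $n\times n$ matrix with $1$'s on the anti-diagonal and $0$'s elsewhere. Then a complete set of representatives of the double cosets $\Gamma_0^n(N)\backslash\mathrm{Sp}_n(\mathbb Q)/P_{n,n-1}(\mathbb Q)$ can be chosen from the set $P_{n,n-1}(\mathbb Q)R$.
   Context: $\Gamma_0^n(N)=\{\begin{pmatrix}A&B\\C&D\end{pmatrix}\in\mathrm{Sp}_n(\mathbb Z): C\equiv0\bmod N\}$. For $1\le r\le n-1$ and a subring $R'\subset\mathbb R$, $P_{n,r}(R')$ is the parabolic subgroup of $\mathrm{Sp}_n(R')$ consisting of the matrices of the block form $\begin{pmatrix}a_{11}&0&b_{11}&b_{12}\\ a_{21}&a_{22}&b_{21}&b_{22}\\ c_{11}&0&d_{11}&d_{12}\\ 0&0&0&d_{22}\end{pmatrix}$, where blocks with index $11$ are $r\times r$ and blocks with index $22$ are $(n-r)\times(n-r)$. *)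

theory Defs
  imports "Jordan_Normal_Form.Matrix"
begin

text \<open>Matrices are 2n x 2n rational matrices, rows/columns indexed 0..2n-1;
  block (1,1) = rows/cols 0..n-1, block (2,2) = rows/cols n..2n-1.\<close>

definition J_mat :: "nat \<Rightarrow> rat mat" where
  "J_mat n = four_block_mat (0\<^sub>m n n) (1\<^sub>m n) (- 1\<^sub>m n) (0\<^sub>m n n)"

definition Sp_Q :: "nat \<Rightarrow> rat mat set" where
  "Sp_Q n = {M \<in> carrier_mat (2*n) (2*n). transpose_mat M * J_mat n * M = J_mat n}"

definition Gamma0 :: "nat \<Rightarrow> nat \<Rightarrow> rat mat set" where
  "Gamma0 n N = {M \<in> Sp_Q n.
      (\<forall>i<2*n. \<forall>j<2*n. M $$ (i,j) \<in> \<int>) \<and>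
      (\<forall>i<n. \<forall>j<n. \<exists>k::int. M $$ (n+i, j) = of_int (int N * k))}"

text \<open>Parabolic P_{n,r}(Q): symplectic with the block zero pattern
  [[a11,0,b11,b12],[a21,a22,b21,b22],[c11,0,d11,d12],[0,0,0,d22]].\<close>
definition P_Q :: "nat \<Rightarrow> nat \<Rightarrow> rat mat set" where
  "P_Q n r = {M \<in> Sp_Q n.
      \<forall>i<2*n. \<forall>j<2*n.
        (((i < r \<or> (n \<le> i \<and> i < n + r)) \<and> r \<le> j \<and> j < n) \<or>
         (n + r \<le> i \<and> j < n + r)) \<longrightarrow> M $$ (i,j) = 0}"

definition antidiag_mat :: "nat \<Rightarrow> rat mat" where
  "antidiag_mat n = mat n n (\<lambda>(i,j). if i + j = n - 1 then 1 else 0)"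

definition R_mat :: "nat \<Rightarrow> rat mat" where
  "R_mat n = four_block_mat (antidiag_mat n) (0\<^sub>m n n) (0\<^sub>m n n) (antidiag_mat n)"

definition double_coset :: "nat \<Rightarrow> nat \<Rightarrow> nat \<Rightarrow> rat mat \<Rightarrow> rat mat set" where
  "double_coset n N r g = {\<gamma> * g * p | \<gamma> p. \<gamma> \<in> Gamma0 n N \<and> p \<in> P_Q n r}"

end

theory Submission
  imports Defs "Jordan_Normal_Form.Determinant"
begin


lemma J_carrier[simp]: "J_mat n \<in> carrier_mat (2*n) (2*n)"
  unfolding J_mat_def by (metis four_block_carrier_mat mult_2 zero_carrier_mat)

lemma J_dim[simp]: "dim_row (J_mat n) = 2*n" "dim_col (J_mat n) = 2*n"
  using J_carrier[of n] unfolding carrier_mat_def by auto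

lemma assoc5: fixes A :: "'a::semiring_0 mat"
  assumes "A \<in> carrier_mat m m" "B \<in> carrier_mat m m" "C \<in> carrier_mat m m" "D \<in> carrier_mat m m" "E \<in> carrier_mat m m"
  shows "(A*B)*C*(D*E) = A*(B*C*D)*E"
proof -
  have "(A*B)*C*(D*E) = A*(B*(C*(D*E)))" using assms by (simp add: assoc_mult_mat[of _ m m _ m _ m])
  also have "A*(B*C*D)*E = A*(B*(C*(D*E)))" using assms by (simp add: assoc_mult_mat[of _ m m _ m _ m])
  finally show ?thesis by simp
qed

lemma assoc4: fixes A :: "'a::semiring_0 mat"
  assumes "A \<in> carrier_mat m m" "B \<in> carrier_mat m m" "C \<in> carrier_mat m m" "D \<in> carrier_mat m m"
  shows "A*(B*C)*D = A*(B*C*D)"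
  using assms by (simp add: assoc_mult_mat[of _ m m _ m _ m])

lemmas mc = mult_carrier_mat transpose_carrier_mat uminus_carrier_mat

lemma Sp_block:
  assumes A: "A \<in> carrier_mat n n" and B: "B \<in> carrier_mat n n" and C: "C \<in> carrier_mat n n" and D: "D \<in> carrier_mat n n"
  shows "transpose_mat (four_block_mat A B C D) * J_mat n * four_block_mat A B C D =
     four_block_mat (transpose_mat A * C - transpose_mat C * A) (transpose_mat A * D - transpose_mat C * B)
                    (transpose_mat B * C - transpose_mat D * A) (transpose_mat B * D - transpose_mat D * B)"
proof -
  have t: "transpose_mat (four_block_mat A B C D) = four_block_mat (transpose_mat A) (transpose_mat C) (transpose_mat B) (transpose_mat D)"
    by (rule transpose_four_block_mat[OF A B C D])
  have 1: "four_block_mat (transpose_mat A) (transpose_mat C) (transpose_mat B) (transpose_mat D) * J_mat n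
     = four_block_mat (- transpose_mat C) (transpose_mat A) (- transpose_mat D) (transpose_mat B)"
    unfolding J_mat_def using A B C D
    by (subst mult_four_block_mat[of _ n n _ n _ n _ _ n _ n], auto)
  show ?thesis unfolding t 1 using A B C D
    by (subst mult_four_block_mat[of _ n n _ n _ n _ _ n _ n], auto simp: minus_add_uminus_mat)
qed

lemma Sp_carrier: "M \<in> Sp_Q n \<Longrightarrow> M \<in> carrier_mat (2*n) (2*n)"
  unfolding Sp_Q_def by auto

lemma Sp_mult: assumes M: "M \<in> Sp_Q n" and N: "N \<in> Sp_Q n" shows "M * N \<in> Sp_Q n"
proof -
  have Mc: "M \<in> carrier_mat (2*n) (2*n)" and Nc: "N \<in> carrier_mat (2*n) (2*n)"
    using M N Sp_carrier by auto
  have eM: "transpose_mat M * J_mat n * M = J_mat n" and eN: "transpose_mat N * J_mat n * N = J_mat n"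
    using M N unfolding Sp_Q_def by auto
  have "transpose_mat (M * N) * J_mat n * (M * N) = transpose_mat N * (transpose_mat M * J_mat n * M) * N"
    using Mc Nc by (simp add: transpose_mult[OF Mc Nc] assoc5)
  also have "\<dots> = J_mat n" using eM eN by simp
  finally show ?thesis using Mc Nc unfolding Sp_Q_def by auto
qed

lemma Sp_one: "1\<^sub>m (2*n) \<in> Sp_Q n"
  unfolding Sp_Q_def using J_carrier[of n] by auto

lemma J_J: "J_mat n * J_mat n = - 1\<^sub>m (2*n)"
proof -
  have "J_mat n * J_mat n = four_block_mat (- 1\<^sub>m n) (0\<^sub>m n n) (0\<^sub>m n n) (- 1\<^sub>m n)"
    unfolding J_mat_def by (subst mult_four_block_mat[of _ n n _ n _ n _ _ n _ n], auto)
  also have "\<dots> = - four_block_mat (1\<^sub>m n) (0\<^sub>m n n) (0\<^sub>m n n) (1\<^sub>m n)"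
    by (rule eq_matI, auto)
  finally show ?thesis by (simp add: mult_2)
qed

definition sinv :: "nat \<Rightarrow> rat mat \<Rightarrow> rat mat" where
  "sinv n M = - (J_mat n * (transpose_mat M * J_mat n))"

lemma sinv_carrier: "M \<in> carrier_mat (2*n) (2*n) \<Longrightarrow> sinv n M \<in> carrier_mat (2*n) (2*n)"
  unfolding sinv_def by (metis J_carrier mult_carrier_mat transpose_carrier_mat uminus_carrier_mat)

lemma sinv_left: assumes M: "M \<in> Sp_Q n" shows "sinv n M * M = 1\<^sub>m (2*n)"
proof -
  have Mc: "M \<in> carrier_mat (2*n) (2*n)" using M Sp_carrier by auto
  have eM: "transpose_mat M * J_mat n * M = J_mat n" using M unfolding Sp_Q_def by auto
  have "sinv n M * M = - (J_mat n * (transpose_mat M * J_mat n * M))"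
    unfolding sinv_def using Mc J_carrier[of n]
    by (simp add: assoc4[OF J_carrier transpose_carrier_mat[THEN iffD2, OF Mc] J_carrier Mc])
  also have "\<dots> = 1\<^sub>m (2*n)" unfolding eM J_J by simp
  finally show ?thesis .
qed

lemma sinv_right: assumes M: "M \<in> Sp_Q n" shows "M * sinv n M = 1\<^sub>m (2*n)"
  using mat_mult_left_right_inverse[OF sinv_carrier[OF Sp_carrier[OF M]] Sp_carrier[OF M] sinv_left[OF M]] .

lemma sinv_Sp: assumes M: "M \<in> Sp_Q n" shows "sinv n M \<in> Sp_Q n"
proof -
  have Mc: "M \<in> carrier_mat (2*n) (2*n)" using M Sp_carrier by auto
  have Sc: "sinv n M \<in> carrier_mat (2*n) (2*n)" using sinv_carrier[OF Mc] .
  have eM: "transpose_mat M * J_mat n * M = J_mat n" using M unfolding Sp_Q_def by auto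
  have "transpose_mat (sinv n M) * J_mat n * sinv n M
     = transpose_mat (M * sinv n M) * J_mat n * (M * sinv n M)"
    using Mc Sc by (simp add: transpose_mult[OF Mc Sc] assoc5 eM)
  also have "\<dots> = J_mat n" unfolding sinv_right[OF M] by simp
  finally show ?thesis using Sc unfolding Sp_Q_def by auto
qed

lemma row_J: "i < 2*n \<Longrightarrow> row (J_mat n) i = (if i < n then unit_vec (2*n) (i+n) else - unit_vec (2*n) (i-n))"
  unfolding J_mat_def by (intro eq_vecI, auto)

lemma col_J: "j < 2*n \<Longrightarrow> col (J_mat n) j = (if j < n then - unit_vec (2*n) (j+n) else unit_vec (2*n) (j-n))"
  unfolding J_mat_def by (intro eq_vecI, auto)

lemma J_mult_index: assumes X: "X \<in> carrier_mat (2*n) (2*n)" and i: "i < 2*n" and j: "j < 2*n"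
  shows "(J_mat n * X) $$ (i,j) = (if i < n then X $$ (i+n, j) else - X $$ (i-n, j))"
  using X i j by (auto simp: row_J)

lemma mult_J_index: assumes X: "X \<in> carrier_mat (2*n) (2*n)" and i: "i < 2*n" and j: "j < 2*n"
  shows "(X * J_mat n) $$ (i,j) = (if j < n then - X $$ (i, j+n) else X $$ (i, j-n))"
  using X i j by (auto simp: col_J)

lemma sinv_index: assumes X: "X \<in> carrier_mat (2*n) (2*n)" and i: "i < 2*n" and j: "j < 2*n"
  shows "sinv n X $$ (i,j) = (if i < n then (if j < n then X $$ (j+n, i+n) else - X $$ (j-n,i+n))
                                else (if j < n then - X $$ (j+n, i-n) else X $$ (j-n, i-n)))"
proof -
  have T: "transpose_mat X * J_mat n \<in> carrier_mat (2*n) (2*n)" using X by auto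
  have Xt: "transpose_mat X \<in> carrier_mat (2*n) (2*n)" using X by auto
  have "sinv n X $$ (i,j) = - ((J_mat n * (transpose_mat X * J_mat n)) $$ (i,j))"
    unfolding sinv_def using i j T by (subst index_uminus_mat, auto simp del: index_mult_mat(1))
  also have "\<dots> = - (if i < n then (transpose_mat X * J_mat n) $$ (i+n, j) else - (transpose_mat X * J_mat n) $$ (i-n, j))"
    by (subst J_mult_index[OF T i j], rule refl)
  finally show ?thesis using i j X
    by (simp add: mult_J_index[OF Xt] del: index_mult_mat(1))

qed

lemma prod_entry: assumes "M \<in> carrier_mat m m" "N \<in> carrier_mat m m" "i < m" "j < m"
  shows "(M * N) $$ (i,j) = (\<Sum>k<m. M $$ (i,k) * N $$ (k,j))"
  using assms by (simp add: scalar_prod_def lessThan_atLeast0)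

definition dvdN :: "nat \<Rightarrow> rat \<Rightarrow> bool" where
  "dvdN N x = (\<exists>k::int. x = of_int (int N * k))"

lemma dvdN_mult1: "dvdN N x \<Longrightarrow> y \<in> \<int> \<Longrightarrow> dvdN N (x * y)"
  unfolding dvdN_def by (elim exE, erule Ints_cases) (metis mult.assoc of_int_mult)
lemma dvdN_mult2: "dvdN N x \<Longrightarrow> y \<in> \<int> \<Longrightarrow> dvdN N (y * x)"
  using dvdN_mult1 by (metis mult.commute)
lemma dvdN_uminus: "dvdN N x \<Longrightarrow> dvdN N (- x)"
  unfolding dvdN_def by (metis mult_minus_right of_int_minus)
lemma dvdN_0: "dvdN N 0" unfolding dvdN_def by (rule exI[of _ 0], simp)
lemma dvdN_add: "dvdN N x \<Longrightarrow> dvdN N y \<Longrightarrow> dvdN N (x + y)"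
  unfolding dvdN_def by (metis distrib_left of_int_add)
lemma dvdN_sum: "finite A \<Longrightarrow> (\<And>k. k \<in> A \<Longrightarrow> dvdN N (f k)) \<Longrightarrow> dvdN N (sum f A)"
  by (induction A rule: finite_induct) (auto intro: dvdN_add dvdN_0)

lemma Gamma0_alt: "Gamma0 n N = {M \<in> Sp_Q n. (\<forall>i<2*n. \<forall>j<2*n. M $$ (i,j) \<in> \<int>) \<and>
      (\<forall>i<n. \<forall>j<n. dvdN N (M $$ (n+i, j)))}"
  unfolding Gamma0_def dvdN_def by simp

lemma Gamma0_mult: assumes M: "M \<in> Gamma0 n N" and K: "K \<in> Gamma0 n N" shows "M * K \<in> Gamma0 n N"
proof -
  have MS: "M \<in> Sp_Q n" and KS: "K \<in> Sp_Q n" using M K unfolding Gamma0_alt by auto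
  have Mc: "M \<in> carrier_mat (2*n) (2*n)" and Kc: "K \<in> carrier_mat (2*n) (2*n)" using MS KS Sp_carrier by auto
  have Mi: "\<And>i j. i<2*n \<Longrightarrow> j<2*n \<Longrightarrow> M $$ (i,j) \<in> \<int>" and Ki: "\<And>i j. i<2*n \<Longrightarrow> j<2*n \<Longrightarrow> K $$ (i,j) \<in> \<int>"
    using M K unfolding Gamma0_alt by auto
  have Md: "\<And>i j. i<n \<Longrightarrow> j<n \<Longrightarrow> dvdN N (M $$ (n+i,j))" and Kd: "\<And>i j. i<n \<Longrightarrow> j<n \<Longrightarrow> dvdN N (K $$ (n+i,j))"
    using M K unfolding Gamma0_alt by auto
  have 1: "\<forall>i<2*n. \<forall>j<2*n. (M*K) $$ (i,j) \<in> \<int>"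
    using Mi Ki by (auto simp: prod_entry[OF Mc Kc] intro!: Ints_sum Ints_mult)
  have 2: "\<forall>i<n. \<forall>j<n. dvdN N ((M*K) $$ (n+i, j))"
  proof (intro allI impI)
    fix i j assume i: "i < n" and j: "j < n"
    have e: "(M*K) $$ (n+i, j) = (\<Sum>k<2*n. M $$ (n+i,k) * K $$ (k,j))"
      by (rule prod_entry[OF Mc Kc]) (use i j in auto)
    show "dvdN N ((M*K) $$ (n+i, j))"
      unfolding e
    proof (intro dvdN_sum)
      fix k assume k: "k \<in> {..<2*n}"
      show "dvdN N (M $$ (n + i, k) * K $$ (k, j))"
      proof (cases "k < n")
        case True thus ?thesis using Md[OF i True] Ki[of k j] j by (intro dvdN_mult1) auto
      next
        case False
        hence "K $$ (k,j) = K $$ (n + (k-n), j)" by simp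
        thus ?thesis using Kd[of "k-n" j] Mi[of "n+i" k] k j i False by (auto intro!: dvdN_mult2)
      qed
    qed auto
  qed
  show ?thesis unfolding Gamma0_alt using Sp_mult[OF MS KS] 1 2 by auto
qed

lemma Gamma0_inv: assumes M: "M \<in> Gamma0 n N" shows "sinv n M \<in> Gamma0 n N"
proof -
  have MS: "M \<in> Sp_Q n" using M unfolding Gamma0_alt by auto
  have Mc: "M \<in> carrier_mat (2*n) (2*n)" using MS Sp_carrier by auto
  have Mi: "\<And>i j. i<2*n \<Longrightarrow> j<2*n \<Longrightarrow> M $$ (i,j) \<in> \<int>"
    using M unfolding Gamma0_alt by auto
  have Md: "\<And>i j. i<n \<Longrightarrow> j<n \<Longrightarrow> dvdN N (M $$ (n+i,j))"
    using M unfolding Gamma0_alt by auto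
  have 1: "\<forall>i<2*n. \<forall>j<2*n. sinv n M $$ (i,j) \<in> \<int>"
    using Mi by (auto simp: sinv_index[OF Mc])
  have 2: "\<forall>i<n. \<forall>j<n. dvdN N (sinv n M $$ (n+i, j))"
  proof (intro allI impI)
    fix i j assume i: "i < n" and j: "j < n"
    have "sinv n M $$ (n+i, j) = - M $$ (n + j, i)" using i j by (simp add: sinv_index[OF Mc] add.commute)
    thus "dvdN N (sinv n M $$ (n+i, j))" using Md[OF j i] dvdN_uminus by simp
  qed
  show ?thesis unfolding Gamma0_alt using sinv_Sp[OF MS] 1 2 by auto
qed

lemma Gamma0_one: "1\<^sub>m (2*n) \<in> Gamma0 n N"
  unfolding Gamma0_alt using Sp_one by (auto simp: dvdN_0)

definition ev :: "nat \<Rightarrow> rat vec" where "ev n = unit_vec (2*n) (n-1)"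

lemma J_ev: "n \<ge> 1 \<Longrightarrow> J_mat n *\<^sub>v ev n = - unit_vec (2*n) (2*n-1)"
  unfolding ev_def by (intro eq_vecI) (auto simp: row_J)

lemma Mev_index: "M \<in> carrier_mat (2*n) (2*n) \<Longrightarrow> n \<ge> 1 \<Longrightarrow> i < 2*n \<Longrightarrow> (M *\<^sub>v ev n) $ i = M $$ (i, n-1)"
  unfolding ev_def by simp

lemma P_char: assumes n: "n \<ge> 2"
  shows "M \<in> P_Q n (n-1) \<longleftrightarrow> M \<in> Sp_Q n \<and> (\<exists>c. M *\<^sub>v ev n = c \<cdot>\<^sub>v ev n)"
proof
  assume M: "M \<in> P_Q n (n-1)"
  hence MS: "M \<in> Sp_Q n" unfolding P_Q_def by auto
  have Mc: "M \<in> carrier_mat (2*n) (2*n)" using MS Sp_carrier by auto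
  have z: "\<And>i. i < 2*n \<Longrightarrow> i \<noteq> n-1 \<Longrightarrow> M $$ (i, n-1) = 0"
  proof -
    fix i assume i: "i < 2*n" "i \<noteq> n-1"
    have "(((i < n-1 \<or> (n \<le> i \<and> i < n + (n-1))) \<and> n-1 \<le> n-1 \<and> n-1 < n) \<or>
         (n + (n-1) \<le> i \<and> n-1 < n + (n-1)))" using i n by auto
    thus "M $$ (i, n-1) = 0" using M i n unfolding P_Q_def by auto
  qed
  have "M *\<^sub>v ev n = M $$ (n-1,n-1) \<cdot>\<^sub>v ev n"
    by (rule eq_vecI, insert Mc n z, auto simp: Mev_index, auto simp: ev_def)
  thus "M \<in> Sp_Q n \<and> (\<exists>c. M *\<^sub>v ev n = c \<cdot>\<^sub>v ev n)" using MS by blast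
next
  assume "M \<in> Sp_Q n \<and> (\<exists>c. M *\<^sub>v ev n = c \<cdot>\<^sub>v ev n)"
  then obtain c where MS: "M \<in> Sp_Q n" and Mv: "M *\<^sub>v ev n = c \<cdot>\<^sub>v ev n" by auto
  have Mc: "M \<in> carrier_mat (2*n) (2*n)" using MS Sp_carrier by auto
  have eM: "transpose_mat M * J_mat n * M = J_mat n" using MS unfolding Sp_Q_def by auto
  have evc: "ev n \<in> carrier_vec (2*n)" unfolding ev_def by simp
  have "transpose_mat M *\<^sub>v (J_mat n *\<^sub>v (M *\<^sub>v ev n)) = J_mat n *\<^sub>v ev n"
    using Mc evc by (metis eM assoc_mult_mat_vec J_carrier transpose_carrier_mat mult_carrier_mat mult_mat_vec_carrier)
  also have "J_mat n *\<^sub>v (M *\<^sub>v ev n) = c \<cdot>\<^sub>v (- unit_vec (2*n) (2*n-1))"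
    unfolding Mv using mult_mat_vec[OF J_carrier evc] J_ev n by simp
  finally have key: "transpose_mat M *\<^sub>v (c \<cdot>\<^sub>v (- unit_vec (2*n) (2*n-1))) = - unit_vec (2*n) (2*n-1)"
    using J_ev n by simp
  have row: "\<And>j. j < 2*n \<Longrightarrow> c * M $$ (2*n-1, j) = (if j = 2*n-1 then 1 else 0)"
  proof -
    fix j assume j: "j < 2*n"
    have "(transpose_mat M *\<^sub>v (c \<cdot>\<^sub>v (- unit_vec (2*n) (2*n-1)))) $ j = (- unit_vec (2*n) (2*n-1)) $ j"
      using key by simp
    thus "c * M $$ (2*n-1, j) = (if j = 2*n-1 then 1 else 0)" using j Mc n
      by (auto simp: scalar_prod_smult_right)
  qed
  have c0: "c \<noteq> 0" using row[of "2*n-1"] n by auto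
  have col: "\<And>i. i < 2*n \<Longrightarrow> M $$ (i, n-1) = (if i = n-1 then c else 0)"
  proof -
    fix i assume i: "i < 2*n"
    have "(M *\<^sub>v ev n) $ i = (c \<cdot>\<^sub>v ev n) $ i" using Mv by simp
    thus "M $$ (i, n-1) = (if i = n-1 then c else 0)" using i n Mc by (simp add: Mev_index ev_def)
  qed
  show "M \<in> P_Q n (n-1)" unfolding P_Q_def
  proof (intro CollectI conjI allI impI MS)
    fix i j assume i: "i < 2*n" and j: "j < 2*n" and
      cond: "((i < n-1 \<or> (n \<le> i \<and> i < n + (n-1))) \<and> n-1 \<le> j \<and> j < n) \<or> (n + (n-1) \<le> i \<and> j < n + (n-1))"
    show "M $$ (i,j) = 0"
    proof (cases "n + (n-1) \<le> i")
      case True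
      hence "i = 2*n-1" using i by auto
      moreover have "j \<noteq> 2*n-1" using cond True n by auto
      ultimately show ?thesis using row[OF j] c0 by auto
    next
      case False
      hence "j = n-1" "i \<noteq> n-1" using cond n by auto
      thus ?thesis using col[OF i] by auto
    qed
  qed
qed

lemma sqmult[simp]: "A \<in> carrier_mat m m \<Longrightarrow> B \<in> carrier_mat m m \<Longrightarrow> A * B \<in> carrier_mat m m"
  by (rule mult_carrier_mat)

lemma ev_carrier[simp]: "ev n \<in> carrier_vec (2*n)" unfolding ev_def by simp
lemma ev_nz: "n \<ge> 1 \<Longrightarrow> ev n \<noteq> 0\<^sub>v (2*n)" unfolding ev_def by simp

lemma P_carrier: "n \<ge> 2 \<Longrightarrow> M \<in> P_Q n (n-1) \<Longrightarrow> M \<in> carrier_mat (2*n) (2*n)"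
  using P_char Sp_carrier by blast

lemma P_one: "n \<ge> 2 \<Longrightarrow> 1\<^sub>m (2*n) \<in> P_Q n (n-1)"
  unfolding P_char using Sp_one by (auto intro!: exI[of _ 1])

lemma P_mult: assumes n: "n \<ge> 2" and M: "M \<in> P_Q n (n-1)" and K: "K \<in> P_Q n (n-1)"
  shows "M * K \<in> P_Q n (n-1)"
proof -
  obtain a where MS: "M \<in> Sp_Q n" and Ma: "M *\<^sub>v ev n = a \<cdot>\<^sub>v ev n" using M P_char[OF n] by auto
  obtain b where KS: "K \<in> Sp_Q n" and Kb: "K *\<^sub>v ev n = b \<cdot>\<^sub>v ev n" using K P_char[OF n] by auto
  have Mc: "M \<in> carrier_mat (2*n) (2*n)" and Kc: "K \<in> carrier_mat (2*n) (2*n)" using MS KS Sp_carrier by auto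
  have "(M * K) *\<^sub>v ev n = M *\<^sub>v (K *\<^sub>v ev n)" using Mc Kc by simp
  also have "\<dots> = (b * a) \<cdot>\<^sub>v ev n" unfolding Kb mult_mat_vec[OF Mc ev_carrier] Ma by (rule smult_smult_assoc)
  finally show ?thesis unfolding P_char[OF n] using Sp_mult[OF MS KS] by blast
qed

lemma P_inv: assumes n: "n \<ge> 2" and M: "M \<in> P_Q n (n-1)"
  shows "sinv n M \<in> P_Q n (n-1)"
proof -
  obtain a where MS: "M \<in> Sp_Q n" and Ma: "M *\<^sub>v ev n = a \<cdot>\<^sub>v ev n" using M P_char[OF n] by auto
  have Mc: "M \<in> carrier_mat (2*n) (2*n)" using MS Sp_carrier by auto
  have Sc: "sinv n M \<in> carrier_mat (2*n) (2*n)" using sinv_carrier[OF Mc] .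
  have "ev n = (sinv n M * M) *\<^sub>v ev n" unfolding sinv_left[OF MS] by simp
  also have "\<dots> = sinv n M *\<^sub>v (M *\<^sub>v ev n)" using Mc Sc by simp
  also have "\<dots> = a \<cdot>\<^sub>v (sinv n M *\<^sub>v ev n)" unfolding Ma mult_mat_vec[OF Sc ev_carrier] ..
  finally have e: "ev n = a \<cdot>\<^sub>v (sinv n M *\<^sub>v ev n)" .
  have a0: "a \<noteq> 0"
  proof
    assume "a = 0"
    have "ev n = 0\<^sub>v (2*n)"
    proof (rule eq_vecI)
      fix i assume i: "i < dim_vec (0\<^sub>v (2*n) :: rat vec)"
      have "ev n $ i = (a \<cdot>\<^sub>v (sinv n M *\<^sub>v ev n)) $ i" using e by simp
      also have "\<dots> = 0" using i Sc \<open>a = 0\<close> by simp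
      finally show "ev n $ i = 0\<^sub>v (2*n) $ i" using i by simp
    qed simp
    thus False using ev_nz[of n] n by simp
  qed
  have "(1/a) \<cdot>\<^sub>v ev n = (1/a) \<cdot>\<^sub>v (a \<cdot>\<^sub>v (sinv n M *\<^sub>v ev n))" using e by simp
  also have "\<dots> = ((1/a) * a) \<cdot>\<^sub>v (sinv n M *\<^sub>v ev n)" by (rule smult_smult_assoc)
  also have "\<dots> = sinv n M *\<^sub>v ev n" using a0 by simp
  finally have "sinv n M *\<^sub>v ev n = (1/a) \<cdot>\<^sub>v ev n" by simp
  thus ?thesis unfolding P_char[OF n] using sinv_Sp[OF MS] by blast
qed

lemma dc_eq: assumes n: "n \<ge> 2" and s: "s \<in> carrier_mat (2*n) (2*n)"
  and g: "g \<in> double_coset n N (n-1) s"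
  shows "double_coset n N (n-1) g = double_coset n N (n-1) s"
proof -
  obtain \<gamma> p where gd: "g = \<gamma> * s * p" and \<gamma>: "\<gamma> \<in> Gamma0 n N" and p: "p \<in> P_Q n (n-1)"
    using g unfolding double_coset_def by auto
  have \<gamma>S: "\<gamma> \<in> Sp_Q n" using \<gamma> unfolding Gamma0_def by auto
  have \<gamma>c: "\<gamma> \<in> carrier_mat (2*n) (2*n)" using \<gamma>S Sp_carrier by auto
  have pc: "p \<in> carrier_mat (2*n) (2*n)" using P_carrier[OF n p] .
  have pS: "p \<in> Sp_Q n" using p P_char[OF n] by auto
  show ?thesis
  proof
    show "double_coset n N (n-1) g \<subseteq> double_coset n N (n-1) s"
    proof
      fix h assume "h \<in> double_coset n N (n-1) g"
      then obtain \<gamma>' p' where hd: "h = \<gamma>' * g * p'" and \<gamma>': "\<gamma>' \<in> Gamma0 n N" and p': "p' \<in> P_Q n (n-1)"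
        unfolding double_coset_def by auto
      have \<gamma>'c: "\<gamma>' \<in> carrier_mat (2*n) (2*n)" using \<gamma>' unfolding Gamma0_def using Sp_carrier by auto
      have p'c: "p' \<in> carrier_mat (2*n) (2*n)" using P_carrier[OF n p'] .
      have "h = (\<gamma>' * \<gamma>) * s * (p * p')" unfolding hd gd using \<gamma>'c \<gamma>c s pc p'c
        by (simp add: assoc_mult_mat[of _ "2*n" "2*n" _ "2*n" _ "2*n"])
      thus "h \<in> double_coset n N (n-1) s" unfolding double_coset_def
        using Gamma0_mult[OF \<gamma>' \<gamma>] P_mult[OF n p p'] by blast
    qed
  next
    show "double_coset n N (n-1) s \<subseteq> double_coset n N (n-1) g"
    proof
      fix h assume "h \<in> double_coset n N (n-1) s"
      then obtain \<gamma>' p' where hd: "h = \<gamma>' * s * p'" and \<gamma>': "\<gamma>' \<in> Gamma0 n N" and p': "p' \<in> P_Q n (n-1)"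
        unfolding double_coset_def by auto
      have \<gamma>'c: "\<gamma>' \<in> carrier_mat (2*n) (2*n)" using \<gamma>' unfolding Gamma0_def using Sp_carrier by auto
      have p'c: "p' \<in> carrier_mat (2*n) (2*n)" using P_carrier[OF n p'] .
      have ic: "sinv n \<gamma> \<in> carrier_mat (2*n) (2*n)" "sinv n p \<in> carrier_mat (2*n) (2*n)"
        using sinv_carrier \<gamma>c pc by auto
      have "(\<gamma>' * sinv n \<gamma>) * g * (sinv n p * p') = \<gamma>' * (sinv n \<gamma> * \<gamma>) * s * (p * sinv n p) * p'"
        unfolding gd using \<gamma>'c \<gamma>c s pc p'c ic
        by (simp add: assoc_mult_mat[of _ "2*n" "2*n" _ "2*n" _ "2*n"])
      also have "\<dots> = h" unfolding sinv_left[OF \<gamma>S] sinv_right[OF pS] hd using \<gamma>'c s p'c by simp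
      finally have "h = (\<gamma>' * sinv n \<gamma>) * g * (sinv n p * p')" by simp
      thus "h \<in> double_coset n N (n-1) g" unfolding double_coset_def
        using Gamma0_mult[OF \<gamma>' Gamma0_inv[OF \<gamma>]] P_mult[OF n P_inv[OF n p] p'] by blast
    qed
  qed
qed

lemma dc_self: assumes n: "n \<ge> 2" and g: "g \<in> carrier_mat (2*n) (2*n)"
  shows "g \<in> double_coset n N (n-1) g"
proof -
  have "g = 1\<^sub>m (2*n) * g * 1\<^sub>m (2*n)" using g by simp
  thus ?thesis unfolding double_coset_def using Gamma0_one P_one[OF n] by blast
qed


lemma M0_carrier[simp]: "antidiag_mat n \<in> carrier_mat n n" unfolding antidiag_mat_def by simp
lemma M0_dim[simp]: "dim_row (antidiag_mat n) = n" "dim_col (antidiag_mat n) = n" unfolding antidiag_mat_def by simp_all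

lemma mat_minus_zero[simp]: "(X :: rat mat) \<in> carrier_mat n m \<Longrightarrow> X - 0\<^sub>m n m = X"
  by (rule eq_matI) auto
lemma mat_zero_minus[simp]: "(X :: rat mat) \<in> carrier_mat n m \<Longrightarrow> 0\<^sub>m n m - X = - X"
  by (rule eq_matI) auto
lemma M0_zero[simp]: "antidiag_mat n * 0\<^sub>m n m = 0\<^sub>m n m" "0\<^sub>m m n * antidiag_mat n = 0\<^sub>m m n"
  by (rule eq_matI, auto)+
lemma M0_T: "transpose_mat (antidiag_mat n) = antidiag_mat n"
  unfolding antidiag_mat_def by (rule eq_matI) auto
lemma M0_sq: "antidiag_mat n * antidiag_mat n = 1\<^sub>m n"
proof (rule eq_matI)
  fix i j assume i: "i < dim_row (1\<^sub>m n :: rat mat)" and j: "j < dim_col (1\<^sub>m n :: rat mat)"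
  have "(antidiag_mat n * antidiag_mat n) $$ (i,j) = (\<Sum>k<n. antidiag_mat n $$ (i,k) * antidiag_mat n $$ (k,j))"
    using i j by (intro prod_entry) auto
  also have "\<dots> = (\<Sum>k<n. if k = n-1-i then (if i = j then 1 else 0) else 0)"
    using i j unfolding antidiag_mat_def by (intro sum.cong) auto
  also have "\<dots> = 1\<^sub>m n $$ (i,j)" using i j by simp
  finally show "(antidiag_mat n * antidiag_mat n) $$ (i,j) = 1\<^sub>m n $$ (i,j)" .
qed (auto simp: antidiag_mat_def)

lemma Sp_I: "M \<in> carrier_mat (2*n) (2*n) \<Longrightarrow> transpose_mat M * J_mat n * M = J_mat n \<Longrightarrow> M \<in> Sp_Q n"
  unfolding Sp_Q_def by auto

lemma fb_carrier2: "A \<in> carrier_mat n n \<Longrightarrow> B \<in> carrier_mat n n \<Longrightarrow> C \<in> carrier_mat n n \<Longrightarrow> D \<in> carrier_mat n n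
  \<Longrightarrow> four_block_mat A B C D \<in> carrier_mat (2*n) (2*n)"
  by (metis four_block_carrier_mat mult_2)

lemma R_carrier: "R_mat n \<in> carrier_mat (2*n) (2*n)"
  unfolding R_mat_def by (rule fb_carrier2) auto

lemma R_Sp: "R_mat n \<in> Sp_Q n"
proof (rule Sp_I[OF R_carrier])
  show "transpose_mat (R_mat n) * J_mat n * R_mat n = J_mat n"
    unfolding R_mat_def by (subst Sp_block) (auto simp: M0_T M0_sq J_mat_def)
qed

lemma R_sq: "R_mat n * R_mat n = 1\<^sub>m (2*n)"
proof -
  show ?thesis unfolding R_mat_def
    by (subst mult_four_block_mat[of _ n n _ n _ n _ _ n _ n]) (auto simp: M0_sq mult_2)
qed

lemma unit_index: "(M :: rat mat) \<in> carrier_mat m m \<Longrightarrow> k < m \<Longrightarrow> i < m \<Longrightarrow> (M *\<^sub>v unit_vec m k) $ i = M $$ (i,k)"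
  by (subst index_mult_mat_vec) (auto simp: carrier_matD)

definition f0 :: "nat \<Rightarrow> rat vec" where "f0 n = unit_vec (2*n) 0"

lemma R_ev: assumes "n \<ge> 2" shows "R_mat n *\<^sub>v ev n = f0 n"
proof (rule eq_vecI)
  fix i assume "i < dim_vec (f0 n)"
  hence i: "i < 2*n" unfolding f0_def by simp
  show "(R_mat n *\<^sub>v ev n) $ i = f0 n $ i"
    unfolding ev_def f0_def using assms i R_carrier[of n]
    by (auto simp: unit_index R_mat_def antidiag_mat_def)
qed (auto simp: f0_def R_mat_def)

definition G1 :: "nat \<Rightarrow> rat mat \<Rightarrow> rat mat \<Rightarrow> rat mat" where
  "G1 n A D = four_block_mat A (0\<^sub>m n n) (0\<^sub>m n n) D"
definition G2 :: "nat \<Rightarrow> rat mat \<Rightarrow> rat mat" where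
  "G2 n B = four_block_mat (1\<^sub>m n) B (0\<^sub>m n n) (1\<^sub>m n)"
definition G3 :: "nat \<Rightarrow> rat mat \<Rightarrow> rat mat" where
  "G3 n C = four_block_mat (1\<^sub>m n) (0\<^sub>m n n) C (1\<^sub>m n)"

lemma G1_Sp: assumes A: "A \<in> carrier_mat n n" and D: "D \<in> carrier_mat n n" and AD: "transpose_mat A * D = 1\<^sub>m n"
  shows "G1 n A D \<in> Sp_Q n"
proof (rule Sp_I)
  show "G1 n A D \<in> carrier_mat (2*n) (2*n)" unfolding G1_def using A D by (intro fb_carrier2) auto
  have DA: "transpose_mat D * A = 1\<^sub>m n"
    using arg_cong[OF AD, of transpose_mat] transpose_mult[of "transpose_mat A" n n D n] A D by simp
  show "transpose_mat (G1 n A D) * J_mat n * G1 n A D = J_mat n"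
    unfolding G1_def using A D by (subst Sp_block) (auto simp: AD DA J_mat_def)
qed

lemma G2_Sp: assumes B: "B \<in> carrier_mat n n" and BT: "transpose_mat B = B"
  shows "G2 n B \<in> Sp_Q n"
proof (rule Sp_I)
  show "G2 n B \<in> carrier_mat (2*n) (2*n)" unfolding G2_def using B by (intro fb_carrier2) auto
  show "transpose_mat (G2 n B) * J_mat n * G2 n B = J_mat n"
    unfolding G2_def using B by (subst Sp_block) (auto simp: BT J_mat_def)
qed

lemma G3_Sp: assumes C: "C \<in> carrier_mat n n" and CT: "transpose_mat C = C"
  shows "G3 n C \<in> Sp_Q n"
proof (rule Sp_I)
  show "G3 n C \<in> carrier_mat (2*n) (2*n)" unfolding G3_def using C by (intro fb_carrier2) auto
  show "transpose_mat (G3 n C) * J_mat n * G3 n C = J_mat n"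
    unfolding G3_def using C by (subst Sp_block) (auto simp: CT J_mat_def)
qed



lemma mat_vec_zero[simp]: "(B :: rat mat) \<in> carrier_mat n m \<Longrightarrow> B *\<^sub>v 0\<^sub>v m = 0\<^sub>v n"
  by (rule eq_vecI) auto

lemma ev_split: "n \<ge> 1 \<Longrightarrow> ev n = unit_vec n (n-1) @\<^sub>v 0\<^sub>v n"
  unfolding ev_def by (rule eq_vecI) auto
lemma f0_split: "n \<ge> 1 \<Longrightarrow> f0 n = unit_vec n 0 @\<^sub>v 0\<^sub>v n"
  unfolding f0_def by (rule eq_vecI) auto

lemma G1_vec: "A \<in> carrier_mat n n \<Longrightarrow> D \<in> carrier_mat n n \<Longrightarrow> x \<in> carrier_vec n \<Longrightarrow> y \<in> carrier_vec n
  \<Longrightarrow> G1 n A D *\<^sub>v (x @\<^sub>v y) = (A *\<^sub>v x) @\<^sub>v (D *\<^sub>v y)"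
  unfolding G1_def by (subst four_block_mat_mult_vec[of _ n n _ n _ n]) auto

lemma G2_vec: "B \<in> carrier_mat n n \<Longrightarrow> x \<in> carrier_vec n \<Longrightarrow> y \<in> carrier_vec n
  \<Longrightarrow> G2 n B *\<^sub>v (x @\<^sub>v y) = (x + B *\<^sub>v y) @\<^sub>v y"
  unfolding G2_def by (subst four_block_mat_mult_vec[of _ n n _ n _ n]) auto

lemma G3_vec: "C \<in> carrier_mat n n \<Longrightarrow> x \<in> carrier_vec n \<Longrightarrow> y \<in> carrier_vec n
  \<Longrightarrow> G3 n C *\<^sub>v (x @\<^sub>v y) = x @\<^sub>v (C *\<^sub>v x + y)"
  unfolding G3_def by (subst four_block_mat_mult_vec[of _ n n _ n _ n]) auto

lemma G2_P: assumes n: "n \<ge> 2" and B: "B \<in> carrier_mat n n" and BT: "transpose_mat B = B"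
  shows "G2 n B \<in> P_Q n (n-1)"
  unfolding P_char[OF n] using G2_Sp[OF B BT] G2_vec[OF B] n B
  by (auto simp: ev_split intro!: exI[of _ 1])

lemma G3_P: assumes n: "n \<ge> 2" and C: "C \<in> carrier_mat n n" and CT: "transpose_mat C = C"
  and Ce: "C *\<^sub>v unit_vec n (n-1) = 0\<^sub>v n"
  shows "G3 n C \<in> P_Q n (n-1)"
  unfolding P_char[OF n] using G3_Sp[OF C CT] G3_vec[OF C] n Ce
  by (auto simp: ev_split intro!: exI[of _ 1])

lemma G3N_Gamma: "G3 n (of_nat N \<cdot>\<^sub>m 1\<^sub>m n) \<in> Gamma0 n N"
proof -
  let ?C = "of_nat N \<cdot>\<^sub>m 1\<^sub>m n :: rat mat"
  have C: "?C \<in> carrier_mat n n" by simp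
  have CT: "transpose_mat ?C = ?C" by (rule eq_matI) auto
  have S: "G3 n ?C \<in> Sp_Q n" using G3_Sp[OF C CT] .
  have 1: "\<forall>i<2*n. \<forall>j<2*n. G3 n ?C $$ (i,j) \<in> \<int>"
    unfolding G3_def by auto
  have 2: "\<forall>i<n. \<forall>j<n. dvdN N (G3 n ?C $$ (n+i, j))"
    unfolding G3_def dvdN_def
    by (auto intro: exI[of _ 1] exI[of _ 0])
  show ?thesis unfolding Gamma0_alt using S 1 2 by auto
qed

lemma G1_Gamma: assumes A: "A \<in> carrier_mat n n" and D: "D \<in> carrier_mat n n" and AD: "transpose_mat A * D = 1\<^sub>m n"
  and Ai: "\<And>i j. i < n \<Longrightarrow> j < n \<Longrightarrow> A $$ (i,j) \<in> \<int>"
  and Di: "\<And>i j. i < n \<Longrightarrow> j < n \<Longrightarrow> D $$ (i,j) \<in> \<int>"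
  shows "G1 n A D \<in> Gamma0 n N"
proof -
  have S: "G1 n A D \<in> Sp_Q n" using G1_Sp[OF A D AD] .
  have 1: "\<forall>i<2*n. \<forall>j<2*n. G1 n A D $$ (i,j) \<in> \<int>"
    unfolding G1_def using A D Ai Di by auto
  have 2: "\<forall>i<n. \<forall>j<n. dvdN N (G1 n A D $$ (n+i, j))"
    unfolding G1_def using A D by (auto simp: dvdN_0)
  show ?thesis unfolding Gamma0_alt using S 1 2 by auto
qed


definition E :: "nat \<Rightarrow> rat \<Rightarrow> rat \<Rightarrow> rat \<Rightarrow> rat \<Rightarrow> rat mat" where
  "E n a b c d = mat n n (\<lambda>(i,j). if i = 0 \<and> j = 0 then a else if i = 0 \<and> j = n-1 then b
     else if i = n-1 \<and> j = 0 then c else if i = n-1 \<and> j = n-1 then d else if i = j then 1 else 0)"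

lemma E_carrier[simp]: "E n a b c d \<in> carrier_mat n n" unfolding E_def by simp
lemma E_dim[simp]: "dim_row (E n a b c d) = n" "dim_col (E n a b c d) = n" unfolding E_def by simp_all

lemma E_sum: assumes n: "n \<ge> 2" and i: "i < n"
  shows "(\<Sum>k<n. E n a b c d $$ (i,k) * f k) =
    (if i = 0 then a * f 0 + b * f (n-1) else if i = n-1 then c * f 0 + d * f (n-1) else f i)"
proof -
  have "(\<Sum>k<n. E n a b c d $$ (i,k) * f k) = (\<Sum>k<n. (if k = 0 then E n a b c d $$ (i,0) * f 0 else 0)
     + (if k = n-1 then E n a b c d $$ (i,n-1) * f (n-1) else 0) + (if k = i \<and> i \<noteq> 0 \<and> i \<noteq> n-1 then f i else 0))"
    using n i by (intro sum.cong) (auto simp: E_def)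
  also have "\<dots> = E n a b c d $$ (i,0) * f 0 + E n a b c d $$ (i,n-1) * f (n-1) + (if i \<noteq> 0 \<and> i \<noteq> n-1 then f i else 0)"
    using n i by (simp add: sum.distrib)
  also have "\<dots> = (if i = 0 then a * f 0 + b * f (n-1) else if i = n-1 then c * f 0 + d * f (n-1) else f i)"
    using n i by (auto simp: E_def)
  finally show ?thesis .
qed

lemma E_T: "n \<ge> 2 \<Longrightarrow> transpose_mat (E n a b c d) = E n a c b d"
  unfolding E_def by (rule eq_matI) auto

lemma E_one: "n \<ge> 2 \<Longrightarrow> E n 1 0 0 1 = 1\<^sub>m n"
  unfolding E_def by (rule eq_matI) auto

lemma E_mult: assumes n: "n \<ge> 2"
  shows "E n a b c d * E n a' b' c' d' = E n (a*a' + b*c') (a*b' + b*d') (c*a' + d*c') (c*b' + d*d')"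
proof (rule eq_matI)
  fix i j assume i: "i < dim_row (E n (a*a' + b*c') (a*b' + b*d') (c*a' + d*c') (c*b' + d*d'))"
    and j: "j < dim_col (E n (a*a' + b*c') (a*b' + b*d') (c*a' + d*c') (c*b' + d*d'))"
  have i': "i < n" and j': "j < n" using i j by (auto simp: E_def)
  have "(E n a b c d * E n a' b' c' d') $$ (i,j) = (\<Sum>k<n. E n a b c d $$ (i,k) * E n a' b' c' d' $$ (k,j))"
    using i' j' by (intro prod_entry) auto
  also have "\<dots> = E n (a*a' + b*c') (a*b' + b*d') (c*a' + d*c') (c*b' + d*d') $$ (i,j)"
    unfolding E_sum[OF n i'] using n i' j' by (auto simp: E_def)
  finally show "(E n a b c d * E n a' b' c' d') $$ (i,j) = E n (a*a' + b*c') (a*b' + b*d') (c*a' + d*c') (c*b' + d*d') $$ (i,j)" .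
qed (auto simp: E_def)

lemma E_vec: assumes n: "n \<ge> 2" and y: "y \<in> carrier_vec n"
  shows "(E n a b c d *\<^sub>v y) $ 0 = a * y $ 0 + b * y $ (n-1)"
    "(E n a b c d *\<^sub>v y) $ (n-1) = c * y $ 0 + d * y $ (n-1)"
proof -
  have e: "\<And>i. i < n \<Longrightarrow> (E n a b c d *\<^sub>v y) $ i = (\<Sum>k<n. E n a b c d $$ (i,k) * y $ k)"
    using y by (auto simp: scalar_prod_def lessThan_atLeast0 intro!: sum.cong)
  show "(E n a b c d *\<^sub>v y) $ 0 = a * y $ 0 + b * y $ (n-1)"
    using e[of 0] E_sum[OF n, of 0] n by simp
  show "(E n a b c d *\<^sub>v y) $ (n-1) = c * y $ 0 + d * y $ (n-1)"
    using e[of "n-1"] E_sum[OF n, of "n-1"] n by simp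
qed

lemma E_int: "a \<in> \<int> \<Longrightarrow> b \<in> \<int> \<Longrightarrow> c \<in> \<int> \<Longrightarrow> d \<in> \<int> \<Longrightarrow> i < n \<Longrightarrow> j < n \<Longrightarrow> E n a b c d $$ (i,j) \<in> \<int>"
  unfolding E_def by auto


lemma rat_common: fixes u v :: rat
  obtains a b dd :: int where "dd > 0" "u = of_int a / of_int dd" "v = of_int b / of_int dd"
proof -
  obtain p0 q0 where 0: "quotient_of u = (p0,q0)" by (cases "quotient_of u") auto
  obtain p1 q1 where 1: "quotient_of v = (p1,q1)" by (cases "quotient_of v") auto
  have u: "u = of_int p0 / of_int q0" and q0: "q0 > 0" using quotient_of_div[OF 0] quotient_of_denom_pos[OF 0] by auto
  have v: "v = of_int p1 / of_int q1" and q1: "q1 > 0" using quotient_of_div[OF 1] quotient_of_denom_pos[OF 1] by auto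
  show ?thesis
  proof (rule that[of "q0*q1" "p0*q1" "p1*q0"])
    show "q0 * q1 > 0" using q0 q1 by simp
    show "u = of_int (p0*q1) / of_int (q0*q1)" using u q0 q1 by (simp add: field_simps)
    show "v = of_int (p1*q0) / of_int (q0*q1)" using v q0 q1 by (simp add: field_simps)
  qed
qed

lemma append_carrier2: "x \<in> carrier_vec n \<Longrightarrow> y \<in> carrier_vec n \<Longrightarrow> x @\<^sub>v y \<in> carrier_vec (2*n)"
  using append_carrier_vec[of x n y n] by (simp add: mult_2)

lemma bezout_step: assumes n: "n \<ge> 2" and y: "y \<in> carrier_vec n" and y0: "y \<noteq> 0\<^sub>v n"
  shows "\<exists>\<gamma>\<in>Gamma0 n N. \<forall>x\<in>carrier_vec n. \<exists>x' y'. \<gamma> *\<^sub>v (x @\<^sub>v y) = x' @\<^sub>v y' \<and>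
     x' \<in> carrier_vec n \<and> y' \<in> carrier_vec n \<and> y' \<noteq> 0\<^sub>v n \<and> y' $ (n-1) = 0"
proof (cases "y $ (n-1) = 0")
  case True
  show ?thesis
  proof (intro bexI[of _ "1\<^sub>m (2*n)"] ballI)
    fix x :: "rat vec" assume x: "x \<in> carrier_vec n"
    show "\<exists>x' y'. 1\<^sub>m (2*n) *\<^sub>v (x @\<^sub>v y) = x' @\<^sub>v y' \<and>
     x' \<in> carrier_vec n \<and> y' \<in> carrier_vec n \<and> y' \<noteq> 0\<^sub>v n \<and> y' $ (n-1) = 0"
    proof (intro exI conjI)
      show "1\<^sub>m (2*n) *\<^sub>v (x @\<^sub>v y) = x @\<^sub>v y" using append_carrier2[OF x y] by (rule one_mult_mat_vec)
    qed (use x y y0 True in auto)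
  qed (rule Gamma0_one)
next
  case False
  obtain a b dd :: int where dd: "dd > 0" and ya: "y $ 0 = of_int a / of_int dd"
    and yb: "y $ (n-1) = of_int b / of_int dd" by (rule rat_common)
  have b0: "b \<noteq> 0" using False yb by auto
  define g where "g = gcd a b"
  have g0: "g \<noteq> 0" using b0 unfolding g_def by simp
  obtain s t where st: "s * a + t * b = g" using bezout_int[of a b] unfolding g_def by blast
  have "g dvd a" unfolding g_def by simp
  then obtain a'' where a'': "a = g * a''" by (rule dvdE)
  have "g dvd b" unfolding g_def by simp
  then obtain b'' where b'': "b = g * b''" by (rule dvdE)
  define a' where "a' = a''"
  define b' where "b' = b''"
  have a': "a = a' * g" using a'' unfolding a'_def by simp
  have b': "b = b' * g" using b'' unfolding b'_def by simp
  have st1: "s * a' + t * b' = 1"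
  proof -
    have "g * (s * a' + t * b') = g * 1" using st unfolding a'' b'' a'_def b'_def by (simp add: algebra_simps)
    thus ?thesis using g0 by simp
  qed
  have st1r: "of_int s * of_int a' + of_int t * of_int b' = (1::rat)"
    using arg_cong[OF st1, of "of_int :: int \<Rightarrow> rat"] by simp
  define A where "A = E n (of_int a') (of_int b') (of_int (-t)) (of_int s)"
  define D where "D = E n (of_int s) (of_int t) (of_int (-b')) (of_int a')"
  have Ac: "A \<in> carrier_mat n n" and Dc: "D \<in> carrier_mat n n" unfolding A_def D_def by auto
  have AD: "transpose_mat A * D = 1\<^sub>m n"
  proof -
    have "transpose_mat A * D = E n (of_int a' * of_int s + of_int (-t) * of_int (-b'))
       (of_int a' * of_int t + of_int (-t) * of_int a') (of_int b' * of_int s + of_int s * of_int (-b'))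
       (of_int b' * of_int t + of_int s * of_int a')"
      unfolding A_def D_def E_T[OF n] E_mult[OF n] ..
    also have "\<dots> = E n 1 0 0 1" using st1r by (simp add: algebra_simps)
    finally show ?thesis using E_one[OF n] by simp
  qed
  have \<gamma>: "G1 n A D \<in> Gamma0 n N"
    by (rule G1_Gamma[OF Ac Dc AD]) (auto simp: A_def D_def intro!: E_int)
  have Dy: "D *\<^sub>v y \<in> carrier_vec n" using Dc y by simp
    have "(D *\<^sub>v y) $ 0 = of_int s * (of_int a / of_int dd) + of_int t * (of_int b / of_int dd)"
    unfolding D_def E_vec[OF n y] ya yb by simp
  also have "\<dots> = of_int (s * a + t * b) / of_int dd" using dd by (simp add: field_simps)
  finally have e0: "(D *\<^sub>v y) $ 0 = of_int g / of_int dd" unfolding st .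
  have Dnz: "D *\<^sub>v y \<noteq> 0\<^sub>v n"
  proof
    assume "D *\<^sub>v y = 0\<^sub>v n"
    hence "(D *\<^sub>v y) $ 0 = 0" using n by simp
    thus False using e0 g0 dd by simp
  qed
  have "(D *\<^sub>v y) $ (n-1) = of_int (-b') * (of_int a / of_int dd) + of_int a' * (of_int b / of_int dd)"
    unfolding D_def E_vec[OF n y] ya yb by simp
  also have "\<dots> = of_int (-b' * a + a' * b) / of_int dd" using dd by (simp add: field_simps)
  finally have e1: "(D *\<^sub>v y) $ (n-1) = of_int (-b' * a + a' * b) / of_int dd" .
  have h: "-b' * a + a' * b = 0" unfolding a'' b'' a'_def b'_def by (simp add: algebra_simps)
  have Dn1: "(D *\<^sub>v y) $ (n-1) = 0" unfolding e1 h by simp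
  show ?thesis
  proof (rule bexI[OF _ \<gamma>], intro ballI)
    fix x :: "rat vec" assume x: "x \<in> carrier_vec n"
    have "G1 n A D *\<^sub>v (x @\<^sub>v y) = (A *\<^sub>v x) @\<^sub>v (D *\<^sub>v y)" by (rule G1_vec[OF Ac Dc x y])
    moreover have "A *\<^sub>v x \<in> carrier_vec n" using Ac x by simp
    ultimately show "\<exists>x' y'. G1 n A D *\<^sub>v (x @\<^sub>v y) = x' @\<^sub>v y' \<and>
     x' \<in> carrier_vec n \<and> y' \<in> carrier_vec n \<and> y' \<noteq> 0\<^sub>v n \<and> y' $ (n-1) = 0"
      using Dy Dnz Dn1 by blast
  qed
qed


lemma smult_one_vec: "x \<in> carrier_vec n \<Longrightarrow> ((c::rat) \<cdot>\<^sub>m 1\<^sub>m n) *\<^sub>v x = c \<cdot>\<^sub>v x"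
  by (intro eq_vecI) (auto simp: scalar_prod_smult_left)

lemma step1: assumes n: "n \<ge> 2" and N: "N \<ge> 1" and v: "v \<in> carrier_vec (2*n)" and v0: "v \<noteq> 0\<^sub>v (2*n)"
  shows "\<exists>\<gamma>\<in>Gamma0 n N. \<exists>x y. \<gamma> *\<^sub>v v = x @\<^sub>v y \<and> x \<in> carrier_vec n \<and> y \<in> carrier_vec n \<and> y \<noteq> 0\<^sub>v n"
proof -
  define x0 where "x0 = vec_first v n"
  define y0 where "y0 = vec_last v n"
  have vs: "v = x0 @\<^sub>v y0" unfolding x0_def y0_def using v by (simp add: mult_2)
  have x0c: "x0 \<in> carrier_vec n" and y0c: "y0 \<in> carrier_vec n" unfolding x0_def y0_def by auto
  show ?thesis
  proof (cases "y0 = 0\<^sub>v n")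
    case False
    have "1\<^sub>m (2*n) *\<^sub>v v = x0 @\<^sub>v y0" using v vs by simp
    thus ?thesis using Gamma0_one x0c y0c False by blast
  next
    case True
    have x0nz: "x0 \<noteq> 0\<^sub>v n"
    proof
      assume "x0 = 0\<^sub>v n"
      hence "v = 0\<^sub>v n @\<^sub>v 0\<^sub>v n" using vs True by simp
      also have "\<dots> = 0\<^sub>v (2*n)" by (rule eq_vecI) auto
      finally show False using v0 by simp
    qed
    then obtain i where i: "i < n" and xi: "x0 $ i \<noteq> 0" using x0c by (metis eq_vecI index_zero_vec carrier_vecD)
    let ?C = "of_nat N \<cdot>\<^sub>m 1\<^sub>m n :: rat mat"
    have e: "G3 n ?C *\<^sub>v v = x0 @\<^sub>v (?C *\<^sub>v x0 + y0)" unfolding vs by (rule G3_vec) (use x0c y0c in auto)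
    have yc: "?C *\<^sub>v x0 + y0 \<in> carrier_vec n" using x0c y0c by (simp add: smult_one_vec)
    have "(?C *\<^sub>v x0 + y0) $ i = of_nat N * x0 $ i" using i x0c True by (simp add: smult_one_vec)
    hence "?C *\<^sub>v x0 + y0 \<noteq> 0\<^sub>v n" using N xi i by auto
    thus ?thesis using G3N_Gamma e x0c yc by blast
  qed
qed

lemma P_step: assumes n: "n \<ge> 2" and x: "x \<in> carrier_vec n" and y: "y \<in> carrier_vec n"
  and y0: "y \<noteq> 0\<^sub>v n" and yl: "y $ (n-1) = 0"
  shows "\<exists>p\<in>P_Q n (n-1). p *\<^sub>v f0 n = x @\<^sub>v y"
proof -
  define C where "C = mat n n (\<lambda>(i,j). if j = 0 then y $ i else if i = 0 then y $ j else 0)"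
  have Cc: "C \<in> carrier_mat n n" unfolding C_def by simp
  have CT: "transpose_mat C = C" unfolding C_def by (rule eq_matI) auto
  have Ce: "C *\<^sub>v unit_vec n (n-1) = 0\<^sub>v n"
    by (rule eq_vecI) (use n yl Cc in \<open>auto simp: unit_index C_def\<close>)
  have C0: "C *\<^sub>v unit_vec n 0 = y"
    by (rule eq_vecI) (use n y Cc in \<open>auto simp: unit_index C_def\<close>)
  obtain k where k: "k < n" and yk: "y $ k \<noteq> 0" using y0 y by (metis eq_vecI index_zero_vec carrier_vecD)
  define z where "z = x - unit_vec n 0"
  have zc: "z \<in> carrier_vec n" unfolding z_def using x by simp
  define B where "B = mat n n (\<lambda>(i,j). ((if j = k then z $ i else 0) + (if i = k then z $ j else 0)) / y $ k
      - (if i = k \<and> j = k then (z \<bullet> y) / (y $ k)^2 else 0))"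
  have Bc: "B \<in> carrier_mat n n" unfolding B_def by simp
  have BT: "transpose_mat B = B" unfolding B_def by (rule eq_matI) auto
  have By: "B *\<^sub>v y = z"
  proof (rule eq_vecI)
    fix i assume "i < dim_vec z"
    hence i: "i < n" using zc by simp
    have "(B *\<^sub>v y) $ i = (\<Sum>j<n. B $$ (i,j) * y $ j)"
      using i y Bc by (auto simp: scalar_prod_def lessThan_atLeast0 intro!: sum.cong)
    also have "\<dots> = (\<Sum>j<n. (if j = k then z $ i else 0) + (if i = k then z $ j * y $ j / y $ k else 0)
        - (if i = k \<and> j = k then (z \<bullet> y) / y $ k else 0))"
      using i k yk unfolding B_def by (intro sum.cong) (auto simp: field_simps power2_eq_square)
    also have "\<dots> = z $ i + (if i = k then (\<Sum>j<n. z $ j * y $ j) / y $ k else 0) - (if i = k then (z \<bullet> y) / y $ k else 0)"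
      using k by (simp add: sum.distrib sum_subtractf sum_divide_distrib)
    also have "(\<Sum>j<n. z $ j * y $ j) = z \<bullet> y" using y by (simp add: scalar_prod_def lessThan_atLeast0)
    finally show "(B *\<^sub>v y) $ i = z $ i" by simp
  qed (use Bc zc in auto)
  have G3c: "G3 n C \<in> carrier_mat (2*n) (2*n)" using G3_Sp[OF Cc CT] Sp_carrier by auto
  have G2c: "G2 n B \<in> carrier_mat (2*n) (2*n)" using G2_Sp[OF Bc BT] Sp_carrier by auto
  have pP: "G2 n B * G3 n C \<in> P_Q n (n-1)"
    by (rule P_mult[OF n G2_P[OF n Bc BT] G3_P[OF n Cc CT Ce]])
  have "(G2 n B * G3 n C) *\<^sub>v f0 n = G2 n B *\<^sub>v (G3 n C *\<^sub>v f0 n)"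
    using G2c G3c by (simp add: f0_def)
  also have "G3 n C *\<^sub>v f0 n = unit_vec n 0 @\<^sub>v y"
  proof -
    have "f0 n = unit_vec n 0 @\<^sub>v 0\<^sub>v n" using n f0_split by simp
    thus ?thesis using n G3_vec[OF Cc, of "unit_vec n 0" "0\<^sub>v n"] C0 y by simp
  qed
  also have "G2 n B *\<^sub>v (unit_vec n 0 @\<^sub>v y) = (unit_vec n 0 + z) @\<^sub>v y"
    using G2_vec[OF Bc, of "unit_vec n 0" y] y By by simp
  also have "unit_vec n 0 + z = x" unfolding z_def using x by (intro eq_vecI) auto
  finally show ?thesis using pP by blast
qed


lemma cancel_left: assumes "A \<in> carrier_mat m m" "B \<in> carrier_mat m m" "(X::rat mat) \<in> carrier_mat m m" "A * B = 1\<^sub>m m"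
  shows "A * (B * X) = X"
proof -
  have "A * (B * X) = (A * B) * X" by (rule assoc_mult_mat[OF assms(1-3), symmetric])
  also have "\<dots> = X" unfolding assms(4) by (rule left_mult_one_mat[OF assms(3)])
  finally show ?thesis .
qed

lemma amv: "A \<in> carrier_mat m m \<Longrightarrow> B \<in> carrier_mat m m \<Longrightarrow> (v :: rat vec) \<in> carrier_vec m \<Longrightarrow> (A*B) *\<^sub>v v = A *\<^sub>v (B *\<^sub>v v)"
  by (rule assoc_mult_mat_vec)

lemma main_exists: assumes n: "n \<ge> 2" and N: "N \<ge> 1" and g: "g \<in> Sp_Q n"
  shows "\<exists>p\<in>P_Q n (n-1). g \<in> double_coset n N (n-1) (p * R_mat n)"
proof -
  have gc: "g \<in> carrier_mat (2*n) (2*n)" using g Sp_carrier by auto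
  define v where "v = g *\<^sub>v ev n"
  have vc: "v \<in> carrier_vec (2*n)" unfolding v_def using gc by simp
  have v0: "v \<noteq> 0\<^sub>v (2*n)"
  proof
    assume v0: "v = 0\<^sub>v (2*n)"
    have eg: "transpose_mat g * J_mat n * g = J_mat n" using g unfolding Sp_Q_def by auto
    have "J_mat n *\<^sub>v ev n = (transpose_mat g * J_mat n * g) *\<^sub>v ev n" unfolding eg ..
    also have "\<dots> = (transpose_mat g * J_mat n) *\<^sub>v v" unfolding v_def
      by (rule assoc_mult_mat_vec[of _ "2*n" "2*n"]) (use gc in auto)
    also have "\<dots> = transpose_mat g *\<^sub>v (J_mat n *\<^sub>v v)"
      by (rule assoc_mult_mat_vec[of _ "2*n" "2*n"]) (use gc vc in auto)
    also have "\<dots> = 0\<^sub>v (2*n)"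
    proof -
      have z1: "J_mat n *\<^sub>v 0\<^sub>v (2*n) = 0\<^sub>v (2*n)" by (rule mat_vec_zero[OF J_carrier])
      have z2: "transpose_mat g *\<^sub>v 0\<^sub>v (2*n) = 0\<^sub>v (2*n)" by (rule mat_vec_zero) (use gc in simp)
      show ?thesis unfolding v0 z1 z2 ..
    qed
    finally have "J_mat n *\<^sub>v ev n = 0\<^sub>v (2*n)" .
    hence u: "- unit_vec (2*n) (2*n-1) = (0\<^sub>v (2*n) :: rat vec)" using J_ev[of n] n by simp
    have "(- unit_vec (2*n) (2*n-1) :: rat vec) $ (2*n-1) = - 1" using n by simp
    thus False unfolding u using n by simp
  qed
  obtain \<gamma>1 x1 y1 where \<gamma>1: "\<gamma>1 \<in> Gamma0 n N" and e1: "\<gamma>1 *\<^sub>v v = x1 @\<^sub>v y1"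
    and x1: "x1 \<in> carrier_vec n" and y1: "y1 \<in> carrier_vec n" and y1nz: "y1 \<noteq> 0\<^sub>v n"
    using step1[OF n N vc v0] by blast
  obtain \<gamma>2 where \<gamma>2: "\<gamma>2 \<in> Gamma0 n N" and h2: "\<forall>x\<in>carrier_vec n. \<exists>x' y'. \<gamma>2 *\<^sub>v (x @\<^sub>v y1) = x' @\<^sub>v y' \<and>
     x' \<in> carrier_vec n \<and> y' \<in> carrier_vec n \<and> y' \<noteq> 0\<^sub>v n \<and> y' $ (n-1) = 0"
    using bezout_step[OF n y1 y1nz] by blast
  obtain x2 y2 where e2: "\<gamma>2 *\<^sub>v (x1 @\<^sub>v y1) = x2 @\<^sub>v y2" and x2: "x2 \<in> carrier_vec n"
    and y2: "y2 \<in> carrier_vec n" and y2nz: "y2 \<noteq> 0\<^sub>v n" and y2l: "y2 $ (n-1) = 0"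
    using h2 x1 by blast
  obtain p where p: "p \<in> P_Q n (n-1)" and ep: "p *\<^sub>v f0 n = x2 @\<^sub>v y2"
    using P_step[OF n x2 y2 y2nz y2l] by blast
  define \<gamma> where "\<gamma> = \<gamma>2 * \<gamma>1"
  have \<gamma>: "\<gamma> \<in> Gamma0 n N" unfolding \<gamma>_def by (rule Gamma0_mult[OF \<gamma>2 \<gamma>1])
  have \<gamma>S: "\<gamma> \<in> Sp_Q n" using \<gamma> unfolding Gamma0_def by auto
  have \<gamma>1c: "\<gamma>1 \<in> carrier_mat (2*n) (2*n)" and \<gamma>2c: "\<gamma>2 \<in> carrier_mat (2*n) (2*n)"
    using \<gamma>1 \<gamma>2 unfolding Gamma0_def using Sp_carrier by auto
  have \<gamma>c: "\<gamma> \<in> carrier_mat (2*n) (2*n)" using \<gamma>S Sp_carrier by auto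
  have pS: "p \<in> Sp_Q n" using p P_char[OF n] by auto
  have pc: "p \<in> carrier_mat (2*n) (2*n)" using pS Sp_carrier by auto
  have spc: "sinv n p \<in> carrier_mat (2*n) (2*n)" using sinv_carrier[OF pc] .
  have s\<gamma>c: "sinv n \<gamma> \<in> carrier_mat (2*n) (2*n)" using sinv_carrier[OF \<gamma>c] .
  have Rc: "R_mat n \<in> carrier_mat (2*n) (2*n)" by (rule R_carrier)
  have ev\<gamma>: "\<gamma> *\<^sub>v v = p *\<^sub>v f0 n"
    unfolding \<gamma>_def ep using \<gamma>1c \<gamma>2c vc e1 e2 by simp
  define q where "q = R_mat n * (sinv n p * (\<gamma> * g))"
  have qS: "q \<in> Sp_Q n" unfolding q_def
    by (intro Sp_mult R_Sp sinv_Sp pS \<gamma>S g)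
  have f0c: "f0 n \<in> carrier_vec (2*n)" unfolding f0_def by simp
  have gv: "(\<gamma> * g) *\<^sub>v ev n = \<gamma> *\<^sub>v v" unfolding v_def by (rule amv[OF \<gamma>c gc ev_carrier])
  have "q *\<^sub>v ev n = R_mat n *\<^sub>v ((sinv n p * (\<gamma> * g)) *\<^sub>v ev n)"
    unfolding q_def by (rule amv[OF Rc _ ev_carrier]) (use spc \<gamma>c gc in simp)
  also have "(sinv n p * (\<gamma> * g)) *\<^sub>v ev n = sinv n p *\<^sub>v ((\<gamma> * g) *\<^sub>v ev n)"
    by (rule amv[OF spc _ ev_carrier]) (use \<gamma>c gc in simp)
  also note gv
  also have "R_mat n *\<^sub>v (sinv n p *\<^sub>v (\<gamma> *\<^sub>v v)) = R_mat n *\<^sub>v ((sinv n p * p) *\<^sub>v f0 n)" unfolding ev\<gamma> amv[OF spc pc f0c] ..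
  also have "\<dots> = R_mat n *\<^sub>v f0 n" unfolding sinv_left[OF pS] using f0c by simp
  also have "\<dots> = (R_mat n * R_mat n) *\<^sub>v ev n" unfolding R_ev[OF n, symmetric] amv[OF Rc Rc ev_carrier] ..
  also have "\<dots> = 1 \<cdot>\<^sub>v ev n" unfolding R_sq by simp
  finally have "q *\<^sub>v ev n = 1 \<cdot>\<^sub>v ev n" .
  hence qP: "q \<in> P_Q n (n-1)" unfolding P_char[OF n] using qS by blast
  have RR: "R_mat n * R_mat n = 1\<^sub>m (2*n)" by (rule R_sq)
  have "sinv n \<gamma> * (p * R_mat n) * q = sinv n \<gamma> * (p * (R_mat n * (R_mat n * (sinv n p * (\<gamma> * g)))))"
    unfolding q_def using s\<gamma>c pc Rc spc \<gamma>c gc by (simp add: assoc_mult_mat[of _ "2*n" "2*n" _ "2*n" _ "2*n"])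
  also have "R_mat n * (R_mat n * (sinv n p * (\<gamma> * g))) = sinv n p * (\<gamma> * g)"
    by (rule cancel_left[OF Rc Rc _ RR]) (use spc \<gamma>c gc in simp)
  also have "p * (sinv n p * (\<gamma> * g)) = \<gamma> * g"
    by (rule cancel_left[OF pc spc _ sinv_right[OF pS]]) (use \<gamma>c gc in simp)
  also have "sinv n \<gamma> * (\<gamma> * g) = g"
    by (rule cancel_left[OF s\<gamma>c \<gamma>c gc sinv_left[OF \<gamma>S]])
  finally have "g = sinv n \<gamma> * (p * R_mat n) * q" by simp
  hence "g \<in> double_coset n N (n-1) (p * R_mat n)"
    unfolding double_coset_def using Gamma0_inv[OF \<gamma>] qP by blast
  thus ?thesis using p by blast
qed

theorem lemma4p3:
  fixes n N :: nat
  assumes "n \<ge> 2" and "N \<ge> 1"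
  shows "\<exists>S. S \<subseteq> {p * R_mat n | p. p \<in> P_Q n (n - 1)} \<and>
             (\<forall>g \<in> Sp_Q n. \<exists>!s. s \<in> S \<and> g \<in> double_coset n N (n - 1) s)"
proof -
  note n = assms(1) and N = assms(2)
  let ?PR = "{p * R_mat n | p. p \<in> P_Q n (n - 1)}"
  let ?cl = "double_coset n N (n - 1)"
  define rep where "rep g = (SOME s. s \<in> ?PR \<and> ?cl s = ?cl g)" for g
  have PRc: "\<And>s. s \<in> ?PR \<Longrightarrow> s \<in> carrier_mat (2*n) (2*n)"
    using P_carrier[OF n] R_carrier by auto
  have rep: "\<And>g. g \<in> Sp_Q n \<Longrightarrow> rep g \<in> ?PR \<and> ?cl (rep g) = ?cl g"
  proof -
    fix g assume g: "g \<in> Sp_Q n"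
    obtain p where p: "p \<in> P_Q n (n-1)" and gp: "g \<in> ?cl (p * R_mat n)" using main_exists[OF n N g] by blast
    have "p * R_mat n \<in> ?PR" using p by blast
    moreover have "?cl (p * R_mat n) = ?cl g" using dc_eq[OF n PRc[OF calculation] gp] by simp
    ultimately have "\<exists>s. s \<in> ?PR \<and> ?cl s = ?cl g" by blast
    thus "rep g \<in> ?PR \<and> ?cl (rep g) = ?cl g" unfolding rep_def by (rule someI_ex)
  qed
  show ?thesis
  proof (intro exI[of _ "rep ` Sp_Q n"] conjI ballI)
    show "rep ` Sp_Q n \<subseteq> ?PR" using rep by auto
    fix g assume g: "g \<in> Sp_Q n"
    have gc: "g \<in> carrier_mat (2*n) (2*n)" using g Sp_carrier by auto
    show "\<exists>!s. s \<in> rep ` Sp_Q n \<and> g \<in> ?cl s"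
    proof (rule ex1I[of _ "rep g"])
      show "rep g \<in> rep ` Sp_Q n \<and> g \<in> ?cl (rep g)" using rep[OF g] dc_self[OF n gc] g by auto
    next
      fix s assume s: "s \<in> rep ` Sp_Q n \<and> g \<in> ?cl s"
      then obtain h where h: "h \<in> Sp_Q n" and sh: "s = rep h" by auto
      have hc: "h \<in> carrier_mat (2*n) (2*n)" using h Sp_carrier by auto
      have "g \<in> ?cl h" using s sh rep[OF h] by auto
      hence "?cl g = ?cl h" by (rule dc_eq[OF n hc])
      thus "s = rep g" unfolding sh rep_def by simp
    qed
  qed
qed


end
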